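(* Let $\mathcal{D}$ be an abstract system of proof notations, $s\ge2$, and let $d\in\mathcal{D}$ be $s$-bounded in $\mathcal{D}$ with height $o(d)=h\ge2$. Then for all $k\ge1$, $\mathsf E^kd$ is $2_{k-1}(2\cdot h)\cdot s$-bounded in $\mathbb{E}(\mathcal{D})$, where $\mathsf E^kd$ denotes $\mathsf E\cdots\mathsf Ed$ with $k$ occurrences of $\mathsf E$.
   Context: An abstract system of proof notations is a set $\mathcal{D}$ with functions $|\cdot|,o(\cdot)\colon\mathcal{D}\to\mathbb{N}\setminus\{0\}$ (size and height) and a relation $\to\subseteq\mathcal{D}\times\mathcal{D}$ such that $d\to d'$ implies $o(d')<o(d)$. The cut-elimination closure $\mathbb{E}(\mathcal{D})$ is the abstract system of formal terms inductively generated by: every $d\in\mathcal{D}$ is in $\mathbb{E}(\mathcal{D})$ (with size and height inherited); if $d,e\in\mathbb{E}(\mathcal{D})$ then $\mathsf{I}d,\ \mathsf{R}de,\ \mathsf{E}d\in\mathbb{E}(\mathcal{D})$ ($\mathsf I,\mathsf R,\mathsf E$ new symbols), with $|\mathsf Id|=|d|+1$, $|\mathsf Rde|=|d|+|e|+1$, $|\mathsf Ed|=|d|+1$, $o(\mathsf Id)=o(d)$, $o(\mathsf Rde)=o(d)+o(e)$, $o(\mathsf Ed)=2^{o(d)}-1$. The relation $\to$ on $\mathbb{E}(\mathcal{D})$ is inductively generated by: $d\to d'$ in $\mathcal{D}$ implies $d\to d'$; $d\to d'$ implies $\mathsf Id\to\mathsf Id'$; $e\to e'$ implies $\mathsf Rde\to\mathsf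 Rde'$; $d\to d'$ implies $\mathsf Ed\to\mathsf Ed'$; $\mathsf Rde\to\mathsf Id$ always; and $d\to d'$ together with $d\to d''$ implies $\mathsf Ed\to\mathsf R(\mathsf Ed')(\mathsf Ed'')$. For an abstract system $\mathcal{X}$ (here $\mathcal{D}$ or $\mathbb{E}(\mathcal{D})$) and $x\in\mathcal{X}$, $x$ is called $t$-bounded in $\mathcal{X}$ if every $x'\in\mathcal{X}$ with $x\to^\ast x'$ (reflexive transitive closure of the relation $\to$ of $\mathcal{X}$) satisfies $|x'|\le t$. Iterated exponentiation: $2_0(x)=x$, $2_{n+1}(x)=2^{2_n(x)}$. *)

theory Defs
  imports Main
begin

text \<open>An abstract system of proof notations on a carrier type 'a (the set D is the whole type):
  size sz, height ht (both positive) and a reduction relation st that strictly decreases height.\<close>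
definition proof_notation_system ::
  "('a \<Rightarrow> nat) \<Rightarrow> ('a \<Rightarrow> nat) \<Rightarrow> ('a \<Rightarrow> 'a \<Rightarrow> bool) \<Rightarrow> bool" where
  "proof_notation_system sz ht st \<longleftrightarrow>
     (\<forall>d. sz d > 0 \<and> ht d > 0) \<and> (\<forall>d d'. st d d' \<longrightarrow> ht d' < ht d)"

datatype 'a eterm = Base 'a | Iop "'a eterm" | Rop "'a eterm" "'a eterm" | Eop "'a eterm"

fun esize :: "('a \<Rightarrow> nat) \<Rightarrow> 'a eterm \<Rightarrow> nat" where
  "esize sz (Base d) = sz d"
| "esize sz (Iop d) = esize sz d + 1"
| "esize sz (Rop d e) = esize sz d + esize sz e + 1"
| "esize sz (Eop d) = esize sz d + 1"

fun eheight :: "('a \<Rightarrow> nat) \<Rightarrow> 'a eterm \<Rightarrow> nat" where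
  "eheight ht (Base d) = ht d"
| "eheight ht (Iop d) = eheight ht d"
| "eheight ht (Rop d e) = eheight ht d + eheight ht e"
| "eheight ht (Eop d) = 2 ^ eheight ht d - 1"

inductive estep :: "('a \<Rightarrow> 'a \<Rightarrow> bool) \<Rightarrow> 'a eterm \<Rightarrow> 'a eterm \<Rightarrow> bool" for st where
  base: "st d d' \<Longrightarrow> estep st (Base d) (Base d')"
| icong: "estep st d d' \<Longrightarrow> estep st (Iop d) (Iop d')"
| rcong: "estep st e e' \<Longrightarrow> estep st (Rop d e) (Rop d e')"
| econg: "estep st d d' \<Longrightarrow> estep st (Eop d) (Eop d')"
| rred: "estep st (Rop d e) (Iop d)"
| ered: "estep st d d' \<Longrightarrow> estep st d d'' \<Longrightarrow> estep st (Eop d) (Rop (Eop d') (Eop d''))"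

definition bounded_in :: "('b \<Rightarrow> nat) \<Rightarrow> ('b \<Rightarrow> 'b \<Rightarrow> bool) \<Rightarrow> nat \<Rightarrow> 'b \<Rightarrow> bool" where
  "bounded_in sz st t x \<longleftrightarrow> (\<forall>x'. st\<^sup>*\<^sup>* x x' \<longrightarrow> sz x' \<le> t)"

fun tower :: "nat \<Rightarrow> nat \<Rightarrow> nat" where
  "tower 0 x = x"
| "tower (Suc n) x = 2 ^ tower n x"

end

theory Submission
  imports Defs
begin

lemma eheight_pos:
  assumes "\<forall>d. ht d > 0" shows "eheight ht t > 0"
  using assms
proof (induction t)
  case (Eop t)
  then have "(1::nat) < 2 ^ eheight ht t" using one_less_power[of "2::nat" "eheight ht t"] by simp
  then show ?case by simp
qed auto

lemma pow_sum_lt: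
  fixes a b c :: nat
  assumes "a < c" "b < c"
  shows "(2::nat)^a - 1 + (2^b - 1) < 2^c - 1"
proof -
  have "(2::nat)^a \<le> 2^(c-1)" "(2::nat)^b \<le> 2^(c-1)"
    using assms by (auto intro: power_increasing)
  moreover have "(2::nat)^c = 2^(c-1) + 2^(c-1)"
    using assms by (cases c) auto
  moreover have "(1::nat) \<le> 2^a" "(1::nat) \<le> 2^b" by auto
  ultimately show ?thesis by linarith
qed

lemma estep_height:
  assumes "estep st x y" "\<forall>d d'. st d d' \<longrightarrow> ht d' < ht d" "\<forall>d. ht d > 0"
  shows "eheight ht y < eheight ht x"
  using assms
proof (induction rule: estep.induct)
  case (econg d d')
  then have "eheight ht d' < eheight ht d" by auto
  then have "(2::nat)^eheight ht d' < 2^eheight ht d" by (rule power_strict_increasing) auto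
  moreover have "(1::nat) \<le> 2^eheight ht d'" by auto
  ultimately show ?case by (simp add: diff_less_mono)
next
  case (rred d e)
  then show ?case using eheight_pos[of ht e] by simp
next
  case (ered d d' d'')
  then show ?case using pow_sum_lt[of "eheight ht d'" "eheight ht d" "eheight ht d''"] by simp
qed auto

lemma rtr_height:
  assumes "(estep st)\<^sup>*\<^sup>* x y" "\<forall>d d'. st d d' \<longrightarrow> ht d' < ht d" "\<forall>d. ht d > 0"
  shows "eheight ht y \<le> eheight ht x"
  using assms(1)
proof (induction rule: rtranclp_induct)
  case (step y z)
  then show ?case using estep_height[OF step(2) assms(2,3)] by simp
qed simp

inductive LL :: "'a eterm set \<Rightarrow> 'a eterm \<Rightarrow> bool" for X where
  le: "y \<in> X \<Longrightarrow> LL X (Eop y)"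
| li: "LL X u \<Longrightarrow> LL X (Iop u)"
| lr: "y \<in> X \<Longrightarrow> LL X u \<Longrightarrow> LL X (Rop (Eop y) u)"

fun PP :: "('a \<Rightarrow> nat) \<Rightarrow> nat \<Rightarrow> 'a eterm \<Rightarrow> nat" where
  "PP ht S (Base _) = 0"
| "PP ht S (Eop y) = (S+2) * eheight ht y - 1"
| "PP ht S (Iop u) = PP ht S u + 1"
| "PP ht S (Rop a b) = max (PP ht S a + 1) (S + 2 + PP ht S b)"

locale setting =
  fixes X :: "'a eterm set" and st :: "'a \<Rightarrow> 'a \<Rightarrow> bool" and ht :: "'a \<Rightarrow> nat" and sz :: "'a \<Rightarrow> nat" and S :: nat
  assumes clos: "\<And>x x'. x \<in> X \<Longrightarrow> estep st x x' \<Longrightarrow> x' \<in> X"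
    and dec: "\<forall>d d'. st d d' \<longrightarrow> ht d' < ht d"
    and pos: "\<forall>d. ht d > 0"
    and szb: "\<And>x. x \<in> X \<Longrightarrow> esize sz x \<le> S"
begin

lemma size_le: "LL X u \<Longrightarrow> esize sz u \<le> PP ht S u"
proof (induction rule: LL.induct)
  case (le y)
  have "eheight ht y \<ge> 1" using eheight_pos[OF pos] by (simp add: Suc_le_eq)
  then have "(S+2) * eheight ht y \<ge> S + 2" using mult_le_mono2[of 1 "eheight ht y" "S+2"] by simp
  then show ?case using szb[OF le] by simp
next
  case (lr y u)
  have "eheight ht y \<ge> 1" using eheight_pos[OF pos] by (simp add: Suc_le_eq)
  then have "(S+2) * eheight ht y \<ge> S + 2" using mult_le_mono2[of 1 "eheight ht y" "S+2"] by simp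
  then show ?case using szb[OF lr(1)] lr by simp
qed simp

lemma step_LL: "LL X u \<Longrightarrow> estep st u u' \<Longrightarrow> LL X u' \<and> PP ht S u' \<le> PP ht S u"
proof (induction arbitrary: u' rule: LL.induct)
  case (le y)
  from le(2) show ?case
  proof (cases rule: estep.cases)
    case (econg d')
    then have "d' \<in> X" using clos le by auto
    moreover have "eheight ht d' \<le> eheight ht y" using estep_height[OF econg(2) dec pos] by simp
    moreover have "(S+2) * eheight ht d' \<le> (S+2) * eheight ht y"
      using calculation(2) by (rule mult_le_mono2)
    ultimately show ?thesis using econg by (auto intro: LL.intros diff_le_mono)
  next
    case (ered d' d'')
    have X: "d' \<in> X" "d'' \<in> X" using clos le ered by auto
    have h1: "eheight ht d' < eheight ht y" "eheight ht d'' < eheight ht y"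
      using estep_height[OF ered(2) dec pos] estep_height[OF ered(3) dec pos] by auto
    have p: "eheight ht d' \<ge> 1" "eheight ht d'' \<ge> 1"
      using eheight_pos[OF pos] by (auto simp add: Suc_le_eq)
    have a: "(S+2) * eheight ht d' + (S+2) \<le> (S+2) * eheight ht y"
      using h1 by (metis Suc_leI add.commute mult_Suc_right mult_le_mono2)
    have b: "(S+2) * eheight ht d'' + (S+2) \<le> (S+2) * eheight ht y"
      using h1 by (metis Suc_leI add.commute mult_Suc_right mult_le_mono2)
    have c: "(S+2) * eheight ht d' \<ge> 1" "(S+2) * eheight ht d'' \<ge> 1" using p by auto
    show ?thesis using ered X a b c by (auto intro: LL.intros)
  qed
next
  case (li u)
  from li(3) show ?case
  proof (cases rule: estep.cases)
    case (icong d')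
    then show ?thesis using li by (auto intro: LL.intros)
  qed
next
  case (lr y u)
  from lr(4) show ?case
  proof (cases rule: estep.cases)
    case (rcong e')
    have h: "LL X e'" "PP ht S e' \<le> PP ht S u" using lr rcong by auto
    have "LL X u'" using h(1) rcong lr(1) by (auto intro: LL.intros)
    moreover have "PP ht S u' \<le> PP ht S (Rop (Eop y) u)"
      unfolding rcong(1) PP.simps(4) using h(2) by (simp only: max_def) auto
    ultimately show ?thesis by blast
  next
    case rred
    then show ?thesis using lr by (auto intro: LL.intros)
  qed
qed

lemma main_bound:
  assumes "x \<in> X" "(estep st)\<^sup>*\<^sup>* (Eop x) u" "\<forall>y\<in>X. eheight ht y \<le> H"
  shows "esize sz u \<le> (S+2) * H - 1"
proof -
  have "LL X u \<and> PP ht S u \<le> PP ht S (Eop x)"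
    using assms(2)
  proof (induction rule: rtranclp_induct)
    case base then show ?case using assms(1) by (auto intro: LL.intros)
  next
    case (step y z) then show ?case using step_LL by fastforce
  qed
  moreover have "PP ht S (Eop x) \<le> (S+2) * H - 1"
  proof -
    have "(S+2) * eheight ht x \<le> (S+2) * H" using assms(1,3) by (intro mult_le_mono2) auto
    then show ?thesis by (simp only: PP.simps diff_le_mono)
  qed
  ultimately show ?thesis using size_le by fastforce
qed

end


lemma base_reducts:
  assumes "(estep st)\<^sup>*\<^sup>* (Base d) u"
  shows "\<exists>d'. u = Base d' \<and> st\<^sup>*\<^sup>* d d'"
  using assms
proof (induction rule: rtranclp_induct)
  case (step y z)
  then obtain d' where "y = Base d'" "st\<^sup>*\<^sup>* d d'" by auto
  with step(2) show ?case by (auto elim: estep.cases)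
qed auto

fun Hf :: "nat \<Rightarrow> nat \<Rightarrow> nat" where
  "Hf h 0 = h"
| "Hf h (Suc k) = 2 ^ Hf h k - 1"

lemma eheight_funpow: "eheight ht ((Eop ^^ k) (Base d)) = Hf (ht d) k"
  by (induction k) auto

lemma sq_pow: "(a::nat) \<ge> 4 \<Longrightarrow> a^2 \<le> 2^a"
proof (induction a rule: dec_induct)
  case base then show ?case by simp
next
  case (step n)
  have "(Suc n)^2 = n^2 + 2*n + 1" by (simp add: power2_eq_square)
  also have "\<dots> \<le> n^2 + n^2"
  proof -
    have "4*n \<le> n*n" using step(1) by (rule mult_le_mono1)
    then show ?thesis unfolding power2_eq_square using step(1) by linarith
  qed
  also have "\<dots> \<le> 2^Suc n" using step(3) by simp
  finally show ?case .
qed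

lemma key_ineq:
  fixes a H :: nat
  assumes "a \<ge> 4" "(H+1)^2 \<le> 2^a"
  shows "(a+1)*H \<le> 2^a"
proof (cases "a \<ge> H + 1")
  case True
  then have "(a+1)*H \<le> (a+1)*(a - 1)" by (intro mult_le_mono2) auto
  also have "\<dots> \<le> a^2" using assms(1) by (cases a) (auto simp: power2_eq_square)
  finally show ?thesis using sq_pow[OF assms(1)] by linarith
next
  case False
  then have "(a+1)*H \<le> (H+1)*H" by (intro mult_le_mono1) auto
  also have "\<dots> \<le> (H+1)^2" by (simp add: power2_eq_square)
  finally show ?thesis using assms(2) by linarith
qed

lemma Hf_pos: "h \<ge> 1 \<Longrightarrow> Hf h k \<ge> 1"
proof (induction k)
  case (Suc k)
  then have "(1::nat) < 2 ^ Hf h k" using one_less_power[of "2::nat" "Hf h k"] by simp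
  then show ?case by simp
qed simp

lemma tower_ge: "x \<ge> 4 \<Longrightarrow> tower j x \<ge> 4"
proof (induction j)
  case (Suc j)
  have "tower j x < 2 ^ tower j x" by (simp add: less_exp)
  moreover have "4 \<le> tower j x" using Suc by simp
  ultimately have "4 \<le> (2::nat) ^ tower j x" by linarith
  then show ?case by simp
qed simp

lemma Hf_inv: "h \<ge> 1 \<Longrightarrow> (Hf h (Suc j) + 1)^2 \<le> 2^(tower j (2*h))"
proof (induction j)
  case 0
  have "(1::nat) \<le> 2^h" by simp
  then have "Hf h (Suc 0) + 1 = 2^h" by simp
  moreover have "((2::nat)^h)^2 = 2^(2*h)" by (simp add: power_mult[symmetric] mult.commute)
  ultimately show ?case by simp
next
  case (Suc j)
  have p: "(1::nat) \<le> 2 ^ Hf h (Suc j)" by simp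
  have "(Hf h (Suc (Suc j)) + 1)^2 = 2^(2 * Hf h (Suc j))"
  proof -
    have "Hf h (Suc (Suc j)) + 1 = 2 ^ Hf h (Suc j)" using p by simp
    moreover have "((2::nat)^Hf h (Suc j))^2 = 2^(2*Hf h (Suc j))" by (simp add: power_mult[symmetric] mult.commute)
    ultimately show ?thesis by simp
  qed
  also have "\<dots> \<le> 2^(2^(tower j (2*h)))"
  proof (rule power_increasing)
    have "\<And>m::nat. 2 * m \<le> (m + 1)^2" by (simp add: power2_eq_square)
    then have "2 * Hf h (Suc j) \<le> (Hf h (Suc j) + 1)^2" by blast
    then show "2 * Hf h (Suc j) \<le> 2^(tower j (2*h))" using Suc by linarith
  qed simp
  finally show ?case by simp
qed

lemma arith_step:
  fixes s h :: nat
  assumes "s \<ge> 2" "h \<ge> 2"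
  shows "((case k of 0 \<Rightarrow> s | Suc j \<Rightarrow> tower j (2*h) * s) + 2) * Hf h k - 1 \<le> tower k (2*h) * s"
proof (cases k)
  case 0
  have "(s+2)*h \<le> 2*h*s + 1"
  proof -
    have le: "2*h \<le> s*h" using assms by (intro mult_le_mono1) auto
    have "(s+2)*h = s*h + 2*h" by algebra
    also have "\<dots> \<le> s*h + s*h" using le by (rule add_left_mono)
    also have "\<dots> = 2*h*s" by algebra
    finally show ?thesis by simp
  qed
  then have X: "(s+2)*h - 1 \<le> 2*h*s" unfolding le_diff_conv by simp
  show ?thesis using X 0 by simp
next
  case (Suc j)
  define a where "a = tower j (2*h)"
  define H where "H = Hf h (Suc j)"
  have a4: "a \<ge> 4" unfolding a_def using assms by (intro tower_ge) auto
  have inv: "(H+1)^2 \<le> 2^a" unfolding a_def H_def using Hf_inv assms by auto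
  have "(a*s+2)*H \<le> ((a+1)*s)*H" using assms by (intro mult_le_mono1) (simp add: algebra_simps)
  also have "\<dots> = ((a+1)*H)*s" by (simp add: algebra_simps)
  also have "\<dots> \<le> 2^a * s" using key_ineq[OF a4 inv] by (rule mult_le_mono1)
  finally show ?thesis using Suc unfolding a_def H_def by simp
qed

theorem mainTheorem9:
  fixes sz ht :: "'a \<Rightarrow> nat" and st :: "'a \<Rightarrow> 'a \<Rightarrow> bool"
    and s h :: nat and d :: 'a
  assumes "proof_notation_system sz ht st"
    and "s \<ge> 2"
    and "bounded_in sz st s d"
    and "ht d = h" and "h \<ge> 2"
  shows "\<forall>k\<ge>1. bounded_in (esize sz) (estep st) (tower (k - 1) (2 * h) * s) ((Eop ^^ k) (Base d))"
proof -
  have dec: "\<forall>d d'. st d d' \<longrightarrow> ht d' < ht d" and pos: "\<forall>d. ht d > 0"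
    using assms(1) unfolding proof_notation_system_def by auto
  define B where "B k = (case k of 0 \<Rightarrow> s | Suc j \<Rightarrow> tower j (2*h) * s)" for k
  have main: "\<forall>u. (estep st)\<^sup>*\<^sup>* ((Eop ^^ k) (Base d)) u \<longrightarrow> esize sz u \<le> B k" for k
  proof (induction k)
    case 0
    show ?case
    proof (intro allI impI)
      fix u assume "(estep st)\<^sup>*\<^sup>* ((Eop ^^ 0) (Base d)) u"
      then obtain d' where "u = Base d'" "st\<^sup>*\<^sup>* d d'" using base_reducts by fastforce
      then show "esize sz u \<le> B 0" using assms(3) unfolding bounded_in_def B_def by auto
    qed
  next
    case (Suc k)
    define X where "X = {u. (estep st)\<^sup>*\<^sup>* ((Eop ^^ k) (Base d)) u}"
    interpret setting X st ht sz "B k"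
      by unfold_locales (auto simp: X_def dec pos Suc intro: rtranclp.rtrancl_into_rtrancl)
    have hb: "\<forall>y\<in>X. eheight ht y \<le> Hf h k"
    proof
      fix y assume "y \<in> X"
      then have "eheight ht y \<le> eheight ht ((Eop ^^ k) (Base d))"
        unfolding X_def using rtr_height[OF _ dec pos] by auto
      then show "eheight ht y \<le> Hf h k" using eheight_funpow[of ht k d] assms(4) by simp
    qed
    have xin: "(Eop ^^ k) (Base d) \<in> X" unfolding X_def by simp
    show ?case
    proof (intro allI impI)
      fix u assume "(estep st)\<^sup>*\<^sup>* ((Eop ^^ Suc k) (Base d)) u"
      then have "(estep st)\<^sup>*\<^sup>* (Eop ((Eop ^^ k) (Base d))) u" by simp
      from main_bound[OF xin this hb] have "esize sz u \<le> (B k + 2) * Hf h k - 1" .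
      also have "\<dots> \<le> B (Suc k)"
        using arith_step[OF assms(2) assms(5), of k] unfolding B_def by simp
      finally show "esize sz u \<le> B (Suc k)" .
    qed
  qed
  show ?thesis
  proof (intro allI impI)
    fix k :: nat assume "k \<ge> 1"
    then obtain j where k: "k = Suc j" by (cases k) auto
    show "bounded_in (esize sz) (estep st) (tower (k - 1) (2 * h) * s) ((Eop ^^ k) (Base d))"
      using main[of k] unfolding bounded_in_def B_def k by simp
  qed
qed

end
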